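(* Let $S\subset\mathbb{N}\oplus\mathbb{Z}^n$ be an ample graded semigroup with restricted growth. Then: 1) the cone $\mathrm{Con}(S)$ is strictly convex, i.e. the Newton convex set $\Delta(S)$ is bounded; 2) for $k>0$ let $d(k)$ be the maximum of the distances from the points $(k,x)$ to the boundary of $\mathrm{Con}(S)$, over $x\in M_S(k)\setminus S_k$ (with $d(k)=0$ if this set is empty). Then $\lim_{k\to\infty} d(k)/k=0$.
   Context: For a subsemigroup $S\subset\mathbb{N}\oplus\mathbb{Z}^n$ and $k>0$, $S_k=\{x\in\mathbb{Z}^n:(k,x)\in S\}$. $S$ is graded if each $S_k$ ($k>0$) is finite and non-empty; ample if there is $m$ such that the differences $a-b$, $a,b\in S_m$, generate $\mathbb{Z}^n$; of restricted growth if there is a constant $C$ with $\#S_k\le Ck^n$ for all $k>0$. $\mathrm{Con}(S)\subset\mathbb{R}^{n+1}$ is the closed convex cone generated by $S\cup\{0\}$; $M_S=\mathrm{Con}(S)\cap(\mathbb{N}\oplus\mathbb{Z}^n)$ and $M_S(k)=\{x:(k,x)\in M_S\}$. The Newton convex set is $\Delta(S)=\{x\in\mathbb{R}^n:(1,x)\in\mathrm{Con}(S)\}$. *)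

theory Defs
  imports "HOL-Analysis.Analysis"
begin

text \<open>A subsemigroup S of N (+) Z^n is modelled as a set of pairs (k, x) with
  k :: nat and x :: int ^ 'n, where the finite type 'n indexes the coordinates
  (so n = CARD('n)).\<close>

definition is_semigroup :: "(nat \<times> (int ^ 'n)) set \<Rightarrow> bool" where
  "is_semigroup S \<longleftrightarrow> (\<forall>a\<in>S. \<forall>b\<in>S. a + b \<in> S)"

definition slice :: "(nat \<times> (int ^ 'n)) set \<Rightarrow> nat \<Rightarrow> (int ^ 'n) set" where
  "slice S k = {x. (k, x) \<in> S}"

definition graded :: "(nat \<times> (int ^ 'n)) set \<Rightarrow> bool" where
  "graded S \<longleftrightarrow> (\<forall>k>0. finite (slice S k) \<and> slice S k \<noteq> {})"

definition subgroup_generated :: "'a::ab_group_add set \<Rightarrow> 'a set" where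
  "subgroup_generated D = (\<lambda>G. 0 \<in> G \<and> (\<forall>x\<in>G. \<forall>y\<in>G. x - y \<in> G)) hull D"

definition ample :: "(nat \<times> (int ^ 'n)) set \<Rightarrow> bool" where
  "ample S \<longleftrightarrow> (\<exists>m. subgroup_generated {a - b | a b. a \<in> slice S m \<and> b \<in> slice S m} = UNIV)"

definition restricted_growth :: "(nat \<times> (int ^ 'n)) set \<Rightarrow> bool" where
  "restricted_growth S \<longleftrightarrow>
     (\<exists>C::real. \<forall>k>0. real (card (slice S k)) \<le> C * real k ^ CARD('n))"

definition emb :: "nat \<times> (int ^ 'n) \<Rightarrow> real \<times> (real ^ 'n)" where
  "emb p = (real (fst p), (\<chi> i. real_of_int (snd p $ i)))"

definition Con :: "(nat \<times> (int ^ 'n)) set \<Rightarrow> (real \<times> (real ^ 'n)) set" where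
  "Con S = (\<lambda>T. closed T \<and> convex T \<and> cone T) hull (insert 0 (emb ` S))"

definition M_S :: "(nat \<times> (int ^ 'n)) set \<Rightarrow> nat \<Rightarrow> (int ^ 'n) set" where
  "M_S S k = {x. emb (k, x) \<in> Con S}"

definition Newton_set :: "(nat \<times> (int ^ 'n)) set \<Rightarrow> (real ^ 'n) set" where
  "Newton_set S = {x. (1, x) \<in> Con S}"

definition dfun :: "(nat \<times> (int ^ 'n)) set \<Rightarrow> nat \<Rightarrow> real" where
  "dfun S k = (let A = M_S S k - slice S k in
     if A = {} then 0 else Sup ((\<lambda>x. infdist (emb (k, x)) (frontier (Con S))) ` A))"

end

theory Submission
  imports Defs
begin


definition Pos :: "'a::real_vector set \<Rightarrow> 'a set" where
  "Pos F = {(\<Sum>p\<in>F. c p *\<^sub>R p) | c. \<forall>p\<in>F. 0 \<le> c p}"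

definition UP :: "'a::real_vector set \<Rightarrow> 'a set" where
  "UP E = \<Union>{Pos F | F. finite F \<and> F \<subseteq> E}"

lemma Pos_0: "0 \<in> Pos F"
  unfolding Pos_def by (rule CollectI, rule exI[of _ "\<lambda>_. 0"]) auto

lemma Pos_add: assumes "finite F" "x \<in> Pos F" "y \<in> Pos F" shows "x + y \<in> Pos F"
proof -
  obtain c where c: "x = (\<Sum>p\<in>F. c p *\<^sub>R p)" "\<forall>p\<in>F. 0 \<le> c p" using assms(2) unfolding Pos_def by auto
  obtain d where d: "y = (\<Sum>p\<in>F. d p *\<^sub>R p)" "\<forall>p\<in>F. 0 \<le> d p" using assms(3) unfolding Pos_def by auto
  have "x + y = (\<Sum>p\<in>F. (c p + d p) *\<^sub>R p)" using c d by (simp add: sum.distrib scaleR_add_left)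
  moreover have "\<forall>p\<in>F. 0 \<le> c p + d p" using c d by auto
  ultimately show ?thesis unfolding Pos_def by (intro CollectI exI[of _ "\<lambda>p. c p + d p"] conjI) auto
qed

lemma Pos_scale: assumes "x \<in> Pos F" "0 \<le> a" shows "a *\<^sub>R x \<in> Pos F"
proof -
  obtain c where c: "x = (\<Sum>p\<in>F. c p *\<^sub>R p)" "\<forall>p\<in>F. 0 \<le> c p" using assms(1) unfolding Pos_def by auto
  have "a *\<^sub>R x = (\<Sum>p\<in>F. (a * c p) *\<^sub>R p)" using c by (simp add: scaleR_sum_right)
  moreover have "\<forall>p\<in>F. 0 \<le> a * c p" using c assms by auto
  ultimately show ?thesis unfolding Pos_def by (intro CollectI exI[of _ "\<lambda>p. a * c p"] conjI) auto
qed

lemma Pos_mono: assumes "finite G" "F \<subseteq> G" shows "Pos F \<subseteq> Pos G"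
proof
  fix x assume "x \<in> Pos F"
  then obtain c where c: "x = (\<Sum>p\<in>F. c p *\<^sub>R p)" "\<forall>p\<in>F. 0 \<le> c p" unfolding Pos_def by auto
  define d where "d p = (if p \<in> F then c p else 0)" for p
  have "(\<Sum>p\<in>G. d p *\<^sub>R p) = (\<Sum>p\<in>F. d p *\<^sub>R p)"
    by (rule sum.mono_neutral_right[OF assms(1) assms(2)]) (auto simp: d_def)
  also have "\<dots> = x" using c by (simp add: d_def)
  finally show "x \<in> Pos G" using c unfolding Pos_def d_def by (auto intro!: exI[of _ d] simp: d_def)
qed

lemma Pos_mem: assumes "finite F" "p \<in> F" shows "p \<in> Pos F"
proof -
  define c where "c q = (if q = p then 1 else 0::real)" for q
  have "(\<Sum>q\<in>F. c q *\<^sub>R q) = p" using assms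
    by (simp add: c_def if_distrib[of "\<lambda>x. x *\<^sub>R _"] sum.delta cong: if_cong)
  then show ?thesis unfolding Pos_def c_def by (auto intro!: exI[of _ c] simp: c_def)
qed

lemma Pos_sum: assumes "finite F" "finite I" "\<And>i. i \<in> I \<Longrightarrow> w i \<in> Pos F \<and> 0 \<le> a i"
  shows "(\<Sum>i\<in>I. a i *\<^sub>R w i) \<in> Pos F"
  using assms(2,3)
proof (induction I rule: finite_induct)
  case empty then show ?case by (simp add: Pos_0)
next
  case (insert i I) then show ?case by (simp add: Pos_add[OF assms(1)] Pos_scale)
qed

lemma UP_cone: "cone (UP E)"
  unfolding cone_def UP_def using Pos_scale by blast

lemma UP_convex: "convex (UP E)"
proof (rule convexI)
  fix x y :: 'a and u v :: real assume "x \<in> UP E" "y \<in> UP E" "0 \<le> u" "0 \<le> v" "u + v = 1"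
  then obtain F G where F: "finite F" "F \<subseteq> E" "x \<in> Pos F" and G: "finite G" "G \<subseteq> E" "y \<in> Pos G"
    unfolding UP_def by auto
  have "x \<in> Pos (F \<union> G)" "y \<in> Pos (F \<union> G)" using Pos_mono F G by blast+
  then have "u *\<^sub>R x + v *\<^sub>R y \<in> Pos (F \<union> G)"
    using F G \<open>0 \<le> u\<close> \<open>0 \<le> v\<close> by (intro Pos_add Pos_scale) auto
  then show "u *\<^sub>R x + v *\<^sub>R y \<in> UP E" unfolding UP_def using F G by blast
qed

lemma UP_0: "0 \<in> UP E" unfolding UP_def using Pos_0[of "{}"] by blast
lemma UP_E: "E \<subseteq> UP E" unfolding UP_def using Pos_mem[of "{p}" p for p] by blast

lemma Con_props: "closed (Con S) \<and> convex (Con S) \<and> cone (Con S)"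
  unfolding Con_def by (rule hull_in) (auto intro!: closed_Inter convex_Inter cone_Inter)

lemma Con_sub: "insert 0 (emb ` S) \<subseteq> Con S"
  unfolding Con_def by (rule hull_subset)

lemma Con_fst: "z \<in> Con S \<Longrightarrow> 0 \<le> fst z"
proof -
  have "Con S \<subseteq> {z. 0 \<le> fst z}"
    unfolding Con_def
  proof (rule hull_minimal)
    show "insert 0 (emb ` S) \<subseteq> {z. 0 \<le> fst z}" by (auto simp: emb_def)
    show "closed {z::real \<times> (real ^'n). 0 \<le> fst z} \<and> convex {z::real \<times> (real ^'n). 0 \<le> fst z} \<and> cone {z::real \<times> (real ^'n). 0 \<le> fst z}"
      by (auto simp: cone_def convex_def intro!: closed_Collect_le continuous_intros)
  qed
  then show "z \<in> Con S \<Longrightarrow> 0 \<le> fst z" by auto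
qed

lemma Con_UP: "Con S \<subseteq> closure (UP (emb ` S))"
  unfolding Con_def
  apply (rule hull_minimal)
  using UP_0 UP_E closure_subset apply blast
  by (simp add: UP_cone UP_convex cone_closure convex_closure)

lemma interior_Con_UP: "interior (Con S) \<subseteq> UP (emb ` S)"
proof -
  have "interior (Con S) \<subseteq> interior (closure (UP (emb ` S)))" by (rule interior_mono[OF Con_UP])
  also have "\<dots> = interior (UP (emb ` S))" by (rule convex_interior_closure[OF UP_convex])
  finally show ?thesis using interior_subset by blast
qed




lemma local_Pos:
  fixes z :: "'a::euclidean_space"
  assumes "z \<in> interior (UP E)"
  shows "\<exists>r>0. \<exists>F. finite F \<and> F \<subseteq> E \<and> ball z r \<subseteq> Pos F"
proof -
  obtain d0 where d0: "d0 > 0" "ball z d0 \<subseteq> UP E" using assms mem_interior by blast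
  define \<delta> where "\<delta> = d0 / 2"
  have dpos: "\<delta> > 0" using d0 by (simp add: \<delta>_def)
  define W where "W = insert z ((\<lambda>b. z + \<delta> *\<^sub>R b) ` Basis \<union> (\<lambda>b. z - \<delta> *\<^sub>R b) ` Basis)"
  have finW: "finite W" unfolding W_def by simp
  have WU: "W \<subseteq> UP E"
  proof -
    have "w \<in> ball z d0" if "w \<in> W" for w
      using that d0 dpos unfolding W_def \<delta>_def by (auto simp: dist_norm)
    then show ?thesis using d0 by blast
  qed
  have "\<forall>w\<in>W. \<exists>F. finite F \<and> F \<subseteq> E \<and> w \<in> Pos F" using WU unfolding UP_def by blast
  then obtain FF where FF: "\<And>w. w \<in> W \<Longrightarrow> finite (FF w) \<and> FF w \<subseteq> E \<and> w \<in> Pos (FF w)" by metis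
  define F where "F = (\<Union>w\<in>W. FF w)"
  have finF: "finite F" using finW FF unfolding F_def by auto
  have FE: "F \<subseteq> E" using FF unfolding F_def by auto
  have WP: "w \<in> Pos F" if "w \<in> W" for w
    using Pos_mono[OF finF, of "FF w"] FF[OF that] that unfolding F_def by auto
  define r where "r = \<delta> / real (card (Basis::'a set))"
  have cardpos: "card (Basis::'a set) > 0" by (simp add: card_gt_0_iff)
  have rpos: "r > 0" using dpos cardpos by (simp add: r_def)
  have "ball z r \<subseteq> Pos F"
  proof
    fix q assume q: "q \<in> ball z r"
    define u where "u = q - z"
    have nu: "norm u < r" using q by (simp add: u_def dist_norm norm_minus_commute)
    have "(\<Sum>b\<in>Basis. \<bar>u \<bullet> b\<bar>) \<le> (\<Sum>b\<in>(Basis::'a set). norm u)"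
      by (rule sum_mono) (simp add: Basis_le_norm)
    also have "\<dots> = real (card (Basis::'a set)) * norm u" by simp
    also have "\<dots> < real (card (Basis::'a set)) * r" using nu cardpos by simp
    also have "\<dots> = \<delta>" using cardpos by (simp add: r_def)
    finally have sumlt: "(\<Sum>b\<in>Basis. \<bar>u \<bullet> b\<bar>) < \<delta>" .
    define a where "a b = \<bar>u \<bullet> b\<bar> / \<delta>" for b
    define s where "s b = (if 0 \<le> u \<bullet> b then \<delta> else - \<delta>)" for b
    define l0 where "l0 = 1 - (\<Sum>b\<in>Basis. a b)"
    have "(\<Sum>b\<in>Basis. a b) = (\<Sum>b\<in>Basis. \<bar>u \<bullet> b\<bar>) / \<delta>"
      unfolding a_def by (simp add: sum_divide_distrib)
    then have "(\<Sum>b\<in>Basis. a b) < 1" using sumlt dpos by (simp add: divide_less_eq)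
    then have l0: "0 \<le> l0" unfolding l0_def by simp
    have as: "a b * s b = u \<bullet> b" for b
      using dpos unfolding a_def s_def by auto
    have "(\<Sum>b\<in>Basis. a b *\<^sub>R (z + s b *\<^sub>R b)) = (\<Sum>b\<in>Basis. a b) *\<^sub>R z + (\<Sum>b\<in>Basis. (a b * s b) *\<^sub>R b)"
      by (simp add: scaleR_add_right sum.distrib scaleR_sum_left)
    also have "\<dots> = (\<Sum>b\<in>Basis. a b) *\<^sub>R z + u"
      by (simp add: as euclidean_representation)
    finally have eq: "q = l0 *\<^sub>R z + (\<Sum>b\<in>Basis. a b *\<^sub>R (z + s b *\<^sub>R b))"
      unfolding l0_def u_def by (simp add: algebra_simps)
    have zW: "z \<in> W" unfolding W_def by simp
    have sW: "z + s b *\<^sub>R b \<in> W" if "b \<in> Basis" for b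
      using that unfolding W_def s_def by auto
    have sP: "(\<Sum>b\<in>Basis. a b *\<^sub>R (z + s b *\<^sub>R b)) \<in> Pos F"
      by (rule Pos_sum[OF finF]) (use dpos sW WP in \<open>auto simp: a_def\<close>)
    show "q \<in> Pos F" unfolding eq
      by (intro Pos_add[OF finF] Pos_scale WP zW l0 sP)
  qed
  then show ?thesis using rpos finF FE by blast
qed

lemma compact_Pos:
  fixes K :: "'a::euclidean_space set"
  assumes "compact K" "K \<subseteq> interior (UP E)"
  shows "\<exists>F. finite F \<and> F \<subseteq> E \<and> K \<subseteq> Pos F"
proof -
  have "\<forall>z\<in>K. \<exists>rF. fst rF > 0 \<and> finite (snd rF) \<and> snd rF \<subseteq> E \<and> ball z (fst rF) \<subseteq> Pos (snd rF)"
  proof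
    fix z assume "z \<in> K"
    then obtain r F where "r > 0" "finite F" "F \<subseteq> E" "ball z r \<subseteq> Pos F" using local_Pos assms(2) by blast
    then show "\<exists>rF. fst rF > 0 \<and> finite (snd rF) \<and> snd rF \<subseteq> E \<and> ball z (fst rF) \<subseteq> Pos (snd rF)"
      by (intro exI[of _ "(r, F)"]) simp
  qed
  then obtain rF where rF: "\<And>z. z \<in> K \<Longrightarrow> fst (rF z) > 0 \<and> finite (snd (rF z)) \<and> snd (rF z) \<subseteq> E \<and> ball z (fst (rF z)) \<subseteq> Pos (snd (rF z))"
    using bchoice[of K] by (metis (no_types, lifting))
  have cov: "K \<subseteq> (\<Union>z\<in>K. ball z (fst (rF z)))"
  proof
    fix x assume "x \<in> K" then show "x \<in> (\<Union>z\<in>K. ball z (fst (rF z)))" using rF[of x] by (intro UN_I[of x]) auto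
  qed
  have "\<exists>C. C \<subseteq> K \<and> finite C \<and> K \<subseteq> (\<Union>z\<in>C. ball z (fst (rF z)))"
    by (rule compactE_image[OF assms(1) _ cov]) auto
  then obtain C where C: "C \<subseteq> K" "finite C" "K \<subseteq> (\<Union>z\<in>C. ball z (fst (rF z)))" by blast
  define F where "F = (\<Union>z\<in>C. snd (rF z))"
  have finF: "finite F" using C rF unfolding F_def by auto
  have "K \<subseteq> Pos F"
  proof
    fix x assume "x \<in> K"
    then obtain z where z: "z \<in> C" "x \<in> ball z (fst (rF z))" using C by auto
    then have "x \<in> Pos (snd (rF z))" using rF C by blast
    then show "x \<in> Pos F" using Pos_mono[OF finF, of "snd (rF z)"] z unfolding F_def by auto
  qed
  moreover have "F \<subseteq> E" using rF C unfolding F_def by blast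
  ultimately show ?thesis using finF by blast
qed




lemma vec_box: "{x::'a^'n. \<forall>i. x$i \<in> I i} = vec_lambda ` (PiE UNIV I)"
proof
  show "{x::'a^'n. \<forall>i. x$i \<in> I i} \<subseteq> vec_lambda ` (PiE UNIV I)"
  proof
    fix x :: "'a^'n" assume "x \<in> {x. \<forall>i. x$i \<in> I i}"
    then have "(\<lambda>i. x$i) \<in> PiE UNIV I" by auto
    moreover have "x = vec_lambda (\<lambda>i. x$i)" by simp
    ultimately show "x \<in> vec_lambda ` (PiE UNIV I)" by blast
  qed
qed auto

lemma vec_box_finite: "(\<And>i. finite (I i)) \<Longrightarrow> finite {x::'a^'n. \<forall>i. x$i \<in> I i}"
  unfolding vec_box by (intro finite_imageI finite_PiE) auto

lemma vec_box_card: "(\<And>i. finite (I i)) \<Longrightarrow> card {x::'a^'n. \<forall>i. x$i \<in> I i} = (\<Prod>i\<in>UNIV. card (I i))"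
proof -
  assume fin: "\<And>i. finite (I i)"
  have "inj_on vec_lambda (PiE UNIV I :: ('n \<Rightarrow> 'a) set)"
    by (auto simp: inj_on_def vec_lambda_inject)
  then show ?thesis unfolding vec_box by (simp add: card_image card_PiE)
qed

definition Lat :: "(real \<times> (real ^'n)) set" where
  "Lat = {z. fst z \<in> \<int> \<and> (\<forall>i. snd z $ i \<in> \<int>)}"

definition P0 :: "(nat \<times> (int ^ 'n)) set \<Rightarrow> (real \<times> (real ^'n)) set" where
  "P0 S = insert 0 (emb ` S)"

definition DD :: "(nat \<times> (int ^ 'n)) set \<Rightarrow> (real \<times> (real ^'n)) set" where
  "DD S = {a - b | a b. a \<in> P0 S \<and> b \<in> P0 S}"

lemma emb_add: "emb (a + b) = emb a + emb b"
  by (simp add: emb_def vec_eq_iff)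

lemma emb_inj: "emb a = emb b \<Longrightarrow> a = b"
  by (cases a, cases b) (auto simp: emb_def vec_eq_iff prod_eq_iff)

lemma emb_fst: "fst (emb a) = real (fst a)" by (simp add: emb_def)

lemma P0_add: assumes "is_semigroup S" "x \<in> P0 S" "y \<in> P0 S" shows "x + y \<in> P0 S"
proof (cases "x = 0 \<or> y = 0")
  case True then show ?thesis using assms by auto
next
  case False
  then obtain a b where "a \<in> S" "b \<in> S" "x = emb a" "y = emb b" using assms(2,3) unfolding P0_def by auto
  then have "x + y = emb (a + b)" "a + b \<in> S" using assms(1) unfolding is_semigroup_def by (auto simp: emb_add)
  then show ?thesis unfolding P0_def by blast
qed

lemma P0_nat: "is_semigroup S \<Longrightarrow> p \<in> P0 S \<Longrightarrow> real n *\<^sub>R p \<in> P0 S"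
proof (induction n)
  case 0 then show ?case by (simp add: P0_def)
next
  case (Suc n) then show ?case using P0_add[of S p "real n *\<^sub>R p"] by (simp add: scaleR_add_left add.commute)
qed

lemma P0_natcomb:
  assumes "is_semigroup S" "finite F" "F \<subseteq> P0 S"
  shows "(\<Sum>p\<in>F. real (n p) *\<^sub>R p) \<in> P0 S"
  using assms(2,3)
proof (induction F rule: finite_induct)
  case empty then show ?case by (simp add: P0_def)
next
  case (insert p F) then show ?case by (simp add: P0_add[OF assms(1)] P0_nat[OF assms(1)])
qed

lemma Lat_add: "x \<in> Lat \<Longrightarrow> y \<in> Lat \<Longrightarrow> x + y \<in> Lat"
  unfolding Lat_def by auto
lemma Lat_diff: "x \<in> Lat \<Longrightarrow> y \<in> Lat \<Longrightarrow> x - y \<in> Lat"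
  unfolding Lat_def by auto
lemma Lat_scale: "j \<in> \<int> \<Longrightarrow> x \<in> Lat \<Longrightarrow> j *\<^sub>R x \<in> Lat"
  unfolding Lat_def by auto
lemma Lat_emb: "emb a \<in> Lat"
  unfolding Lat_def emb_def by auto
lemma Lat_P0: "P0 S \<subseteq> Lat"
proof
  fix z assume "z \<in> P0 S"
  then show "z \<in> Lat" unfolding P0_def using Lat_emb by (auto simp: Lat_def[of])
qed
lemma Lat_sum: "finite I \<Longrightarrow> (\<And>i. i \<in> I \<Longrightarrow> a i \<in> \<int> \<and> w i \<in> Lat) \<Longrightarrow> (\<Sum>i\<in>I. a i *\<^sub>R w i) \<in> Lat"
  by (induction I rule: finite_induct) (auto intro!: Lat_add Lat_scale simp: Lat_def)

lemma Lat_finite: "finite ((Lat :: (real \<times> (real ^'n)) set) \<inter> cball 0 L)"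
proof -
  define M where "M = \<lceil>L\<rceil>"
  define g where "g p = (real_of_int (fst p), \<chi> i. real_of_int (snd p $ i))" for p :: "int \<times> (int ^'n)"
  have sub: "Lat \<inter> cball 0 L \<subseteq> g ` ({-M..M} \<times> {x. \<forall>i. x$i \<in> {-M..M}})"
  proof
    fix z :: "real \<times> (real ^'n)" assume z: "z \<in> Lat \<inter> cball 0 L"
    then have nz: "norm z \<le> L" by simp
    have nf: "norm (fst z) \<le> norm z" using norm_fst_le[of "fst z" "snd z"] by simp
    have ns: "norm (snd z) \<le> norm z" using norm_snd_le[of "snd z" "fst z"] by simp
    have f1: "\<bar>fst z\<bar> \<le> L" using nz nf by simp
    have f2: "\<bar>snd z $ i\<bar> \<le> L" for i
      using nz ns component_le_norm_cart[of "snd z" i] by linarith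
    have "fst z \<in> \<int>" using z unfolding Lat_def by auto
    then obtain j where j: "fst z = of_int j" using Ints_cases by metis
    have LM: "L \<le> real_of_int M" unfolding M_def by (rule le_of_int_ceiling)
    have "snd z $ i \<in> \<int>" for i using z unfolding Lat_def by auto
    then have "\<forall>i. \<exists>m. snd z $ i = of_int m" using Ints_cases by metis
    then obtain x where x: "\<And>i. snd z $ i = of_int (x i)" by metis
    have "z = g (j, \<chi> i. x i)" unfolding g_def using j x by (simp add: prod_eq_iff vec_eq_iff)
    moreover have "j \<in> {-M..M}"
    proof -
      have "\<bar>real_of_int j\<bar> \<le> L" using f1 j by simp
      then have "- L \<le> real_of_int j" "real_of_int j \<le> L" by linarith+
      then have "real_of_int (- M) \<le> real_of_int j" "real_of_int j \<le> real_of_int M" using LM by simp_all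
      then have "- M \<le> j" "j \<le> M" by (simp_all only: of_int_le_iff)
      then show ?thesis by simp
    qed
    moreover have "(\<chi> i. x i) $ i \<in> {-M..M}" for i
    proof -
      have "\<bar>real_of_int (x i)\<bar> \<le> L" using f2[of i] x[of i] by simp
      then have "- L \<le> real_of_int (x i)" "real_of_int (x i) \<le> L" by linarith+
      then have "real_of_int (- M) \<le> real_of_int (x i)" "real_of_int (x i) \<le> real_of_int M" using LM by simp_all
      then have "- M \<le> x i" "x i \<le> M" by (simp_all only: of_int_le_iff)
      then show ?thesis by simp
    qed
    ultimately show "z \<in> g ` ({-M..M} \<times> {x. \<forall>i. x$i \<in> {-M..M}})"
      by (intro image_eqI[of _ _ "(j, \<chi> i. x i)"]) auto
  qed
  moreover have fin: "finite ({-M..M} \<times> {x::int^'n. \<forall>i. x$i \<in> {-M..M}})"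
    by (intro finite_cartesian_product vec_box_finite) auto
  show ?thesis by (rule finite_subset[OF sub finite_imageI[OF fin]])
qed

lemma DD_P0: "x \<in> P0 S \<Longrightarrow> x \<in> DD S"
  unfolding DD_def by (rule CollectI, rule exI[of _ x], rule exI[of _ 0]) (simp add: P0_def)

lemma DD_add: "is_semigroup S \<Longrightarrow> x \<in> DD S \<Longrightarrow> y \<in> DD S \<Longrightarrow> x + y \<in> DD S"
proof -
  assume sg: "is_semigroup S" and "x \<in> DD S" "y \<in> DD S"
  then obtain a b c d where "x = a - b" "y = c - d" "a \<in> P0 S" "b \<in> P0 S" "c \<in> P0 S" "d \<in> P0 S"
    unfolding DD_def by blast
  then have "x + y = (a + c) - (b + d)" "a + c \<in> P0 S" "b + d \<in> P0 S" using P0_add[OF sg] by auto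
  then show ?thesis unfolding DD_def by blast
qed

lemma DD_neg: "x \<in> DD S \<Longrightarrow> - x \<in> DD S"
proof -
  assume "x \<in> DD S"
  then obtain a b where "x = a - b" "a \<in> P0 S" "b \<in> P0 S" unfolding DD_def by blast
  then have "- x = b - a" by simp
  then show ?thesis using \<open>a \<in> P0 S\<close> \<open>b \<in> P0 S\<close> unfolding DD_def by blast
qed

lemma DD_diff: "is_semigroup S \<Longrightarrow> x \<in> DD S \<Longrightarrow> y \<in> DD S \<Longrightarrow> x - y \<in> DD S"
  using DD_add[of S x "-y"] DD_neg[of y S] by simp

lemma DD_nat: "is_semigroup S \<Longrightarrow> x \<in> DD S \<Longrightarrow> real n *\<^sub>R x \<in> DD S"
proof (induction n)
  case 0 then show ?case using DD_P0[of 0 S] by (simp add: P0_def)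
next
  case (Suc n) then show ?case using DD_add[of S x "real n *\<^sub>R x"] by (simp add: scaleR_add_left add.commute)
qed

lemma DD_int: "is_semigroup S \<Longrightarrow> x \<in> DD S \<Longrightarrow> real_of_int j *\<^sub>R x \<in> DD S"
proof (cases "j \<ge> 0")
  case True
  assume "is_semigroup S" "x \<in> DD S"
  then show ?thesis using DD_nat[of S x "nat j"] True by simp
next
  case False
  assume "is_semigroup S" "x \<in> DD S"
  then have "real (nat (-j)) *\<^sub>R x \<in> DD S" by (rule DD_nat)
  then have "- (real (nat (-j)) *\<^sub>R x) \<in> DD S" by (rule DD_neg)
  then show ?thesis using False by simp
qed

lemma DD_shift:
  assumes sg: "is_semigroup S" and "finite Fin" "Fin \<subseteq> DD S"
  shows "\<exists>w0\<in>P0 S. \<forall>f\<in>Fin. f + w0 \<in> P0 S"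
  using assms(2,3)
proof (induction Fin rule: finite_induct)
  case empty then show ?case by (intro bexI[of _ 0]) (auto simp: P0_def)
next
  case (insert f Fin)
  then obtain w0 where w0: "w0 \<in> P0 S" "\<forall>g\<in>Fin. g + w0 \<in> P0 S" by auto
  obtain a b where ab: "f = a - b" "a \<in> P0 S" "b \<in> P0 S" using insert(4) unfolding DD_def by blast
  have "w0 + b \<in> P0 S" using w0 ab P0_add[OF sg] by auto
  moreover have "f + (w0 + b) = a + w0" using ab by simp
  then have "f + (w0 + b) \<in> P0 S" using ab w0 P0_add[OF sg, of a w0] by simp
  moreover have "g + (w0 + b) \<in> P0 S" if "g \<in> Fin" for g
    using w0 that ab P0_add[OF sg, of "g + w0" b] by (simp add: algebra_simps)
  ultimately show ?case by blast
qed




definition vecr :: "int ^'n \<Rightarrow> real ^'n" where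
  "vecr d = (\<chi> i. real_of_int (d $ i))"

lemma vecr_diff: "vecr (a - b) = vecr a - vecr b" by (simp add: vecr_def vec_eq_iff)
lemma vecr_0: "vecr 0 = 0" by (simp add: vecr_def vec_eq_iff)
lemma emb_eq: "emb (k, x) = (real k, vecr x)" by (simp add: emb_def vecr_def)

lemma Lat_DD:
  assumes sg: "is_semigroup S" and gr: "graded S" and am: "ample S"
  shows "Lat \<subseteq> DD S"
proof
  obtain m where m: "subgroup_generated {a - b | a b. a \<in> slice S m \<and> b \<in> slice S m} = UNIV"
    using am unfolding ample_def by blast
  obtain c where c: "c \<in> slice S 1" using gr unfolding graded_def by auto
  define G where "G = {d. (0::real, vecr d) \<in> DD S}"
  have "subgroup_generated {a - b | a b. a \<in> slice S m \<and> b \<in> slice S m} \<subseteq> G"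
    unfolding subgroup_generated_def
  proof (rule hull_minimal)
    show "{a - b | a b. a \<in> slice S m \<and> b \<in> slice S m} \<subseteq> G"
    proof
      fix d assume "d \<in> {a - b | a b. a \<in> slice S m \<and> b \<in> slice S m}"
      then obtain a b where ab: "d = a - b" "(m, a) \<in> S" "(m, b) \<in> S" unfolding slice_def by auto
      have "(0::real, vecr d) = emb (m, a) - emb (m, b)" using ab by (simp add: emb_eq vecr_diff)
      moreover have "emb (m, a) \<in> P0 S" "emb (m, b) \<in> P0 S" using ab unfolding P0_def by auto
      ultimately show "d \<in> G" unfolding G_def DD_def by blast
    qed
    show "0 \<in> G \<and> (\<forall>x\<in>G. \<forall>y\<in>G. x - y \<in> G)"
    proof
      show "0 \<in> G" unfolding G_def using DD_P0[of 0 S] by (simp add: P0_def vecr_0 zero_prod_def)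
      show "\<forall>x\<in>G. \<forall>y\<in>G. x - y \<in> G"
      proof (intro ballI)
        fix x y assume "x \<in> G" "y \<in> G"
        then have "(0::real, vecr x) - (0, vecr y) \<in> DD S" unfolding G_def using DD_diff[OF sg] by blast
        then show "x - y \<in> G" unfolding G_def by (simp add: vecr_diff)
      qed
    qed
  qed
  then have G: "(0::real, vecr d) \<in> DD S" for d using m unfolding G_def by auto
  fix z :: "real \<times> (real ^'a)" assume "z \<in> Lat"
  then have zi: "fst z \<in> \<int>" "\<And>i. snd z $ i \<in> \<int>" unfolding Lat_def by auto
  obtain j where j: "fst z = of_int j" using zi(1) Ints_cases by metis
  have "\<forall>i. \<exists>t. snd z $ i = of_int t" using zi(2) Ints_cases by metis
  then obtain x where x: "\<And>i. snd z $ i = of_int (x i)" by metis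
  define xv :: "int ^'a" where "xv = (\<chi> i. x i - j * c $ i)"
  have "z = real_of_int j *\<^sub>R emb (1, c) + (0, vecr xv)"
    using j x by (simp add: prod_eq_iff vec_eq_iff emb_def vecr_def xv_def algebra_simps)
  moreover have "emb (1, c) \<in> DD S" using c by (intro DD_P0) (auto simp: P0_def slice_def)
  ultimately show "z \<in> DD S" using DD_add[OF sg] DD_int[OF sg] G by metis
qed

lemma Con_interior:
  assumes gr: "graded S" and am: "ample S"
  shows "interior (Con S) \<noteq> {}"
proof
  assume int: "interior (Con S) = {}"
  obtain a b where ab: "a \<noteq> 0" "Con S \<subseteq> {x. a \<bullet> x = b}"
    using empty_interior_subset_hyperplane[OF conjunct1[OF conjunct2[OF Con_props]] int] by blast
  have "0 \<in> Con S" using Con_sub by blast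
  then have b0: "b = 0" using ab by auto
  have inCon: "emb p \<in> Con S" if "p \<in> S" for p using Con_sub that by blast
  have hyp: "fst a * real k + snd a \<bullet> vecr x = 0" if "(k, x) \<in> S" for k x
  proof -
    have "a \<bullet> emb (k, x) = 0" using inCon[OF that] ab b0 by auto
    then show ?thesis using inner_Pair[of "fst a" "snd a"] by (simp add: emb_eq)
  qed
  obtain m where m: "subgroup_generated {u - v | u v. u \<in> slice S m \<and> v \<in> slice S m} = UNIV"
    using am unfolding ample_def by blast
  define G where "G = {d. snd a \<bullet> vecr d = 0}"
  have "subgroup_generated {u - v | u v. u \<in> slice S m \<and> v \<in> slice S m} \<subseteq> G"
    unfolding subgroup_generated_def
  proof (rule hull_minimal)
    show "{u - v | u v. u \<in> slice S m \<and> v \<in> slice S m} \<subseteq> G"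
    proof
      fix d assume "d \<in> {u - v | u v. u \<in> slice S m \<and> v \<in> slice S m}"
      then obtain u v where uv: "d = u - v" "(m, u) \<in> S" "(m, v) \<in> S" unfolding slice_def by auto
      show "d \<in> G" using hyp[OF uv(2)] hyp[OF uv(3)] uv(1) unfolding G_def
        by (simp add: vecr_diff inner_diff_right)
    qed
    show "0 \<in> G \<and> (\<forall>x\<in>G. \<forall>y\<in>G. x - y \<in> G)"
      unfolding G_def by (simp add: vecr_0 vecr_diff inner_diff_right)
  qed
  then have G: "snd a \<bullet> vecr d = 0" for d using m unfolding G_def by auto
  have "snd a $ i = 0" for i
  proof -
    have "vecr (axis i 1 :: int ^'a) = axis i 1" by (simp add: vecr_def vec_eq_iff axis_def)
    then show ?thesis using G[of "axis i 1"] by (simp add: inner_axis)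
  qed
  then have a2: "snd a = 0" by (simp add: vec_eq_iff)
  obtain c where c: "c \<in> slice S 1" using gr unfolding graded_def by auto
  have "fst a = 0" using hyp[of 1 c] c a2 by (simp add: slice_def)
  then show False using a2 ab(1) by (simp add: prod_eq_iff)
qed




lemma closed_cball_sub:
  fixes C :: "'a::real_normed_vector set"
  assumes "closed C"
  shows "closed {z. cball z r \<subseteq> C}"
proof -
  have eq: "{z. cball z r \<subseteq> C} = (\<Inter>v\<in>cball 0 r. (\<lambda>z. z + v) -` C)"
  proof (intro set_eqI iffI)
    fix z assume "z \<in> {z. cball z r \<subseteq> C}"
    then show "z \<in> (\<Inter>v\<in>cball 0 r. (\<lambda>z. z + v) -` C)"
      by (auto simp: subset_iff dist_norm)
  next
    fix z assume z: "z \<in> (\<Inter>v\<in>cball 0 r. (\<lambda>z. z + v) -` C)"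
    show "z \<in> {z. cball z r \<subseteq> C}"
    proof (rule CollectI, rule subsetI)
      fix q assume "q \<in> cball z r"
      then have "q - z \<in> cball 0 r" by (simp add: dist_norm norm_minus_commute)
      then have "z + (q - z) \<in> C" using z by blast
      then show "q \<in> C" by simp
    qed
  qed
  show ?thesis unfolding eq
    by (intro closed_INT ballI continuous_closed_vimage[OF assms]) (intro continuous_intros)
qed

lemma cone_ball_scale:
  fixes C :: "'a::real_normed_vector set"
  assumes "cone C" "ball z r \<subseteq> C" "c > 0"
  shows "ball (c *\<^sub>R z) (c * r) \<subseteq> C"
proof
  fix y assume y: "y \<in> ball (c *\<^sub>R z) (c * r)"
  have "dist z ((1/c) *\<^sub>R y) = norm ((1/c) *\<^sub>R (c *\<^sub>R z - y))"
    using assms(3) by (simp add: dist_norm algebra_simps)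
  also have "\<dots> = (1/c) * dist (c *\<^sub>R z) y" using assms(3) by (simp add: dist_norm)
  also have "\<dots> < r" using y assms(3) by (simp add: field_simps)
  finally have "(1/c) *\<^sub>R y \<in> C" using assms(2) by auto
  then have "c *\<^sub>R ((1/c) *\<^sub>R y) \<in> C" using assms(1,3) unfolding cone_def by (meson less_imp_le)
  then show "y \<in> C" using assms(3) by simp
qed

lemma core:
  fixes S :: "(nat \<times> (int ^ 'n)) set"
  assumes sg: "is_semigroup S" and gr: "graded S" and am: "ample S" and ep: "\<epsilon> > 0"
  shows "\<exists>k0. \<forall>k\<ge>k0. \<forall>x. ball (emb (k, x)) (\<epsilon> * real k) \<subseteq> Con S \<and> norm (emb (k, x)) \<le> R * real k
            \<longrightarrow> x \<in> slice S k"
proof -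
  have Cc: "closed (Con S)" and Cv: "convex (Con S)" and Ck: "cone (Con S)" using Con_props by blast+
  define R' where "R' = \<bar>R\<bar> + 1"
  define K where "K = {z. cball z (\<epsilon>/2) \<subseteq> Con S} \<inter> {z. 1/2 \<le> fst z \<and> fst z \<le> 1} \<inter> cball 0 R'"
  have "closed {z::real \<times> (real ^'n). 1/2 \<le> fst z \<and> fst z \<le> 1}"
    by (intro closed_Collect_conj closed_Collect_le continuous_intros)
  then have cK: "compact K" unfolding K_def compact_eq_bounded_closed
    by (intro conjI closed_Int closed_cball_sub[OF Cc] closed_cball)
       (auto intro: bounded_Int bounded_cball)
  have KI: "K \<subseteq> interior (UP (emb ` S))"
  proof
    fix z assume "z \<in> K"
    then have "ball z (\<epsilon>/2) \<subseteq> Con S" unfolding K_def using ball_subset_cball by blast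
    then have "z \<in> interior (Con S)" using ep mem_interior by (metis half_gt_zero)
    moreover have "interior (Con S) \<subseteq> interior (UP (emb ` S))"
      using interior_Con_UP by (metis interior_maximal open_interior)
    ultimately show "z \<in> interior (UP (emb ` S))" by blast
  qed
  obtain F where F: "finite F" "F \<subseteq> emb ` S" "K \<subseteq> Pos F" using compact_Pos[OF cK KI] by blast
  define L where "L = (\<Sum>p\<in>F. norm p)"
  have finFin: "finite ((Lat :: (real \<times> (real ^'n)) set) \<inter> cball 0 L)" by (rule Lat_finite)
  have "Lat \<inter> cball 0 L \<subseteq> DD S" using Lat_DD[OF sg gr am] by blast
  then obtain w0 where w0: "w0 \<in> P0 S" "\<And>f. f \<in> Lat \<inter> cball 0 L \<Longrightarrow> f + w0 \<in> P0 S"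
    using DD_shift[OF sg finFin] by blast
  have fw0: "0 \<le> fst w0" using w0(1) unfolding P0_def by (auto simp: emb_def)
  define k0 where "k0 = nat \<lceil>2 * fst w0 + 2 * norm w0 / \<epsilon> + norm w0\<rceil> + 1"
  have "\<forall>k\<ge>k0. \<forall>x. ball (emb (k, x)) (\<epsilon> * real k) \<subseteq> Con S \<and> norm (emb (k, x)) \<le> R * real k
            \<longrightarrow> x \<in> slice S k"
  proof (intro allI impI)
    fix k x assume kk: "k0 \<le> k" and hx: "ball (emb (k, x)) (\<epsilon> * real k) \<subseteq> Con S \<and> norm (emb (k, x)) \<le> R * real k"
    have "real k0 > 2 * fst w0 + 2 * norm w0 / \<epsilon> + norm w0" unfolding k0_def by linarith
    then have kbig: "real k > 2 * fst w0 + 2 * norm w0 / \<epsilon> + norm w0" using kk by linarith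
    have nw0: "0 \<le> 2 * norm w0 / \<epsilon>" "0 \<le> norm w0" using ep by simp_all
    have kpos: "real k > 0" using kbig fw0 nw0 by linarith
    have k1: "2 * fst w0 \<le> real k" using kbig fw0 nw0 by linarith
    have k2: "norm w0 < \<epsilon> / 2 * real k"
    proof -
      have "2 * norm w0 / \<epsilon> < real k" using kbig fw0 nw0 by linarith
      then show ?thesis using ep by (simp add: field_simps)
    qed
    have k3: "norm w0 \<le> real k" using kbig fw0 nw0 by linarith
    define y where "y = emb (k, x)"
    define v where "v = (1 / real k) *\<^sub>R (y - w0)"
    have fy: "fst y = real k" unfolding y_def by (simp add: emb_def)
    have yv: "y - w0 = real k *\<^sub>R v" unfolding v_def using kpos by simp
    have "v \<in> K"
    proof -
      have fv: "fst v = (real k - fst w0) / real k" unfolding v_def using fy by (simp add: divide_simps)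
      have "1/2 \<le> fst v" unfolding fv using k1 kpos by (simp add: field_simps)
      moreover have "fst v \<le> 1" unfolding fv using fw0 kpos by (simp add: field_simps)
      moreover have "norm v \<le> R'"
      proof -
        have "norm v = norm (y - w0) / real k" unfolding v_def using kpos by simp
        also have "\<dots> \<le> (norm y + norm w0) / real k"
          using kpos norm_triangle_ineq4[of y w0] by (simp add: divide_right_mono)
        also have "\<dots> \<le> (R * real k + real k) / real k"
          using hx k3 kpos unfolding y_def by (intro divide_right_mono) auto
        also have "\<dots> = R + 1" using kpos by (simp add: field_simps)
        finally show ?thesis unfolding R'_def by linarith
      qed
      moreover have "cball v (\<epsilon>/2) \<subseteq> Con S"
      proof
        fix q assume q: "q \<in> cball v (\<epsilon>/2)"
        have "y - real k *\<^sub>R q = real k *\<^sub>R (v - q) + w0" using yv by (simp add: algebra_simps)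
        then have "norm (y - real k *\<^sub>R q) \<le> real k * norm (v - q) + norm w0"
          using norm_triangle_ineq[of "real k *\<^sub>R (v - q)" w0] kpos by simp
        also have "\<dots> \<le> real k * (\<epsilon>/2) + norm w0"
          using q kpos by (simp add: dist_norm)
        also have "\<dots> < \<epsilon> * real k" using k2 by (simp add: algebra_simps)
        finally have "real k *\<^sub>R q \<in> ball y (\<epsilon> * real k)" by (simp add: dist_norm)
        then have "real k *\<^sub>R q \<in> Con S" using hx unfolding y_def by blast
        then have "(1 / real k) *\<^sub>R (real k *\<^sub>R q) \<in> Con S" using Ck kpos unfolding cone_def
          by (metis less_eq_real_def zero_less_divide_1_iff)
        then show "q \<in> Con S" using kpos by simp
      qed
      ultimately show ?thesis unfolding K_def by auto
    qed
    then have "v \<in> Pos F" using F by blast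
    then have "y - w0 \<in> Pos F" unfolding yv using kpos by (intro Pos_scale) auto
    then obtain c where c: "y - w0 = (\<Sum>p\<in>F. c p *\<^sub>R p)" "\<forall>p\<in>F. 0 \<le> c p" unfolding Pos_def by auto
    define N where "N = (\<Sum>p\<in>F. real (nat \<lfloor>c p\<rfloor>) *\<^sub>R p)"
    have FP0: "F \<subseteq> P0 S" using F unfolding P0_def by auto
    have NP0: "N \<in> P0 S" unfolding N_def by (rule P0_natcomb[OF sg F(1) FP0])
    define f where "f = (y - w0) - N"
    have fr: "f = (\<Sum>p\<in>F. (c p - real (nat \<lfloor>c p\<rfloor>)) *\<^sub>R p)"
      unfolding f_def N_def c(1) by (simp add: sum_subtractf scaleR_diff_left)
    have "norm f \<le> (\<Sum>p\<in>F. norm ((c p - real (nat \<lfloor>c p\<rfloor>)) *\<^sub>R p))"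
      unfolding fr by (rule norm_sum)
    also have "\<dots> \<le> (\<Sum>p\<in>F. norm p)"
    proof (rule sum_mono)
      fix p assume "p \<in> F"
      then have cp: "0 \<le> c p" using c by auto
      then have "real (nat \<lfloor>c p\<rfloor>) = of_int \<lfloor>c p\<rfloor>" by simp
      then have "0 \<le> c p - real (nat \<lfloor>c p\<rfloor>)" "c p - real (nat \<lfloor>c p\<rfloor>) \<le> 1"
        by (simp_all add: of_int_floor_le) linarith
      then show "norm ((c p - real (nat \<lfloor>c p\<rfloor>)) *\<^sub>R p) \<le> norm p"
        by (simp add: mult_left_le_one_le)
    qed
    finally have nf: "norm f \<le> L" unfolding L_def .
    have yL: "y \<in> Lat" unfolding y_def by (rule Lat_emb)
    have w0L: "w0 \<in> Lat" using w0(1) Lat_P0 by blast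
    have NL: "N \<in> Lat" using NP0 Lat_P0 by blast
    have "f \<in> Lat" unfolding f_def by (intro Lat_diff yL w0L NL)
    then have "f + w0 \<in> P0 S" using w0(2) nf by simp
    then have "(f + w0) + N \<in> P0 S" using NP0 P0_add[OF sg] by blast
    moreover have "(f + w0) + N = y" unfolding f_def by simp
    ultimately have "y \<in> P0 S" by simp
    moreover have "y \<noteq> 0" using fy kpos by auto
    ultimately obtain p where "p \<in> S" "y = emb p" unfolding P0_def by auto
    then have "(k, x) \<in> S" unfolding y_def using emb_inj by metis
    then show "x \<in> slice S k" unfolding slice_def by simp
  qed
  then show ?thesis by blast
qed




lemma ball_infdist:
  fixes z :: "'a::real_normed_vector"
  assumes "z \<in> T" "r \<le> infdist z (frontier T)"
  shows "ball z r \<subseteq> T"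
proof (rule ccontr)
  assume "\<not> ball z r \<subseteq> T"
  then obtain q where q: "q \<in> ball z r" "q \<notin> T" by blast
  have "0 \<le> dist z q" by simp
  moreover have "dist z q < r" using q(1) by simp
  ultimately have "r > 0" by linarith
  then have "z \<in> ball z r \<inter> T" using assms(1) by simp
  then have "ball z r \<inter> T \<noteq> {}" by blast
  moreover have "ball z r - T \<noteq> {}" using q by auto
  ultimately have "ball z r \<inter> frontier T \<noteq> {}" using connected_Int_frontier[OF connected_ball] by blast
  then obtain p where p: "p \<in> ball z r" "p \<in> frontier T" by blast
  have "infdist z (frontier T) \<le> dist z p" by (rule infdist_le[OF p(2)])
  then show False using p(1) assms(2) by simp
qed

lemma Con_norm_bound:
  fixes S :: "(nat \<times> (int ^ 'n)) set"
  assumes gr: "graded S" and bd: "bounded (Newton_set S)"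
  shows "\<exists>R. \<forall>u\<in>Con S. norm u \<le> R * fst u"
proof -
  have Cv: "convex (Con S)" and Ck: "cone (Con S)" using Con_props by blast+
  obtain B where B: "\<And>x. x \<in> Newton_set S \<Longrightarrow> norm x \<le> B" using bd unfolding bounded_iff by blast
  obtain c where c: "c \<in> slice S 1" using gr unfolding graded_def by auto
  define e where "e = emb (1, c)"
  have eC: "e \<in> Con S" using c Con_sub unfolding e_def slice_def by blast
  have fe: "fst e = 1" unfolding e_def by (simp add: emb_def)
  have "norm u \<le> (1 + \<bar>B\<bar>) * fst u" if u: "u \<in> Con S" for u
  proof -
    have t0: "0 \<le> fst u" using Con_fst[OF u] .
    show ?thesis
    proof (cases "fst u = 0")
      case False
      then have tpos: "fst u > 0" using t0 by simp
      have "(1 / fst u) *\<^sub>R u \<in> Con S" using Ck u tpos unfolding cone_def by simp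
      moreover have "(1 / fst u) *\<^sub>R u = (1, (1 / fst u) *\<^sub>R snd u)" using tpos by (simp add: prod_eq_iff)
      ultimately have "(1 / fst u) *\<^sub>R snd u \<in> Newton_set S" unfolding Newton_set_def by simp
      then have "norm ((1 / fst u) *\<^sub>R snd u) \<le> B" by (rule B)
      then have ns: "norm (snd u) \<le> B * fst u" using tpos by (simp add: field_simps)
      have "norm u \<le> norm (fst u) + norm (snd u)" using norm_Pair_le[of "fst u" "snd u"] by simp
      also have "\<dots> \<le> fst u + \<bar>B\<bar> * fst u" using ns t0 by (simp add: mult_right_mono) (smt (verit) mult_right_mono)
      finally show ?thesis by (simp add: algebra_simps)
    next
      case True
      have "snd u = 0"
      proof (rule ccontr)
        assume nz: "snd u \<noteq> 0"
        define s where "s = (\<bar>B\<bar> + norm (snd e) + 1) / norm (snd u)"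
        have npos: "norm (snd u) > 0" using nz by simp
        have s0: "0 \<le> s" unfolding s_def using npos by simp
        have "s *\<^sub>R u \<in> Con S" using Ck u s0 unfolding cone_def by simp
        then have "(1/2) *\<^sub>R e + (1/2) *\<^sub>R (s *\<^sub>R u) \<in> Con S"
          by (intro convexD[OF Cv eC]) auto
        then have "2 *\<^sub>R ((1/2) *\<^sub>R e + (1/2) *\<^sub>R (s *\<^sub>R u)) \<in> Con S"
          using Ck unfolding cone_def by simp
        then have "e + s *\<^sub>R u \<in> Con S" by (simp add: algebra_simps)
        moreover have "e + s *\<^sub>R u = (1, snd e + s *\<^sub>R snd u)" using fe True by (simp add: prod_eq_iff)
        ultimately have "snd e + s *\<^sub>R snd u \<in> Newton_set S" unfolding Newton_set_def by simp
        then have le: "norm (snd e + s *\<^sub>R snd u) \<le> B" by (rule B)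
        have "norm (s *\<^sub>R snd u) = \<bar>B\<bar> + norm (snd e) + 1" unfolding s_def using npos by simp
        moreover have "norm (s *\<^sub>R snd u) \<le> norm (snd e + s *\<^sub>R snd u) + norm (snd e)"
          by (metis add_diff_cancel_left' norm_triangle_ineq4 add.commute)
        ultimately show False using le by linarith
      qed
      then have "u = 0" using True by (simp add: prod_eq_iff)
      then show ?thesis by simp
    qed
  qed
  then show ?thesis by blast
qed

lemma dfun_limit:
  fixes S :: "(nat \<times> (int ^ 'n)) set"
  assumes sg: "is_semigroup S" and gr: "graded S" and am: "ample S" and bd: "bounded (Newton_set S)"
  shows "(\<lambda>k. dfun S k / real k) \<longlonglongrightarrow> 0"
proof (rule LIMSEQ_I)
  fix r :: real assume r: "0 < r"
  obtain R where R: "\<And>u. u \<in> Con S \<Longrightarrow> norm u \<le> R * fst u" using Con_norm_bound[OF gr bd] by blast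
  have r2: "r / 2 > 0" using r by simp
  obtain k0 where k0: "\<And>k x. k \<ge> k0 \<Longrightarrow> ball (emb (k, x)) (r / 2 * real k) \<subseteq> Con S \<and> norm (emb (k, x)) \<le> R * real k
            \<Longrightarrow> x \<in> slice S k"
    using core[OF sg gr am r2, of R] by blast
  have "norm (dfun S k / real k - 0) < r" if kk: "k \<ge> k0 + 1" for k
  proof -
    have kpos: "real k > 0" using kk by simp
    define A where "A = M_S S k - slice S k"
    have bnd: "infdist (emb (k, x)) (frontier (Con S)) \<le> r / 2 * real k" if x: "x \<in> A" for x
    proof (rule ccontr)
      assume "\<not> ?thesis"
      then have le: "r / 2 * real k \<le> infdist (emb (k, x)) (frontier (Con S))" by simp
      have xC: "emb (k, x) \<in> Con S" using x unfolding A_def M_S_def by simp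
      have "ball (emb (k, x)) (r / 2 * real k) \<subseteq> Con S" by (rule ball_infdist[OF xC le])
      moreover have "norm (emb (k, x)) \<le> R * real k" using R[OF xC] by (simp add: emb_def)
      ultimately have "x \<in> slice S k" using k0[of k x] kk by simp
      then show False using x unfolding A_def by simp
    qed
    have d0: "0 \<le> dfun S k" and d1: "dfun S k \<le> r / 2 * real k"
    proof -
      have "0 \<le> dfun S k \<and> dfun S k \<le> r / 2 * real k"
      proof (cases "A = {}")
        case True then show ?thesis using kpos r unfolding dfun_def A_def[symmetric] Let_def by simp
      next
        case False
        then obtain x0 where x0: "x0 \<in> A" by blast
        have ba: "bdd_above ((\<lambda>x. infdist (emb (k, x)) (frontier (Con S))) ` A)"
          using bnd by (intro bdd_aboveI2[where M="r / 2 * real k"]) auto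
        have "0 \<le> Sup ((\<lambda>x. infdist (emb (k, x)) (frontier (Con S))) ` A)"
          by (rule cSUP_upper2[OF ba x0]) (rule infdist_nonneg)
        moreover have "Sup ((\<lambda>x. infdist (emb (k, x)) (frontier (Con S))) ` A) \<le> r / 2 * real k"
          by (rule cSUP_least[OF False bnd])
        ultimately show ?thesis using False unfolding dfun_def A_def[symmetric] Let_def by simp
      qed
      then show "0 \<le> dfun S k" "dfun S k \<le> r / 2 * real k" by simp_all
    qed
    have "dfun S k / real k \<le> r / 2" using d1 kpos by (simp add: divide_simps)
    moreover have "0 \<le> dfun S k / real k" using d0 kpos by simp
    ultimately have "\<bar>dfun S k / real k\<bar> < r" using r by linarith
    then show ?thesis by simp
  qed
  then show "\<exists>no. \<forall>n\<ge>no. norm (dfun S n / real n - 0) < r" by blast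
qed




lemma sep_points:
  fixes A :: "'a::real_normed_vector set"
  assumes nb: "\<not> bounded A" and d: "0 \<le> d"
  shows "\<exists>Y. finite Y \<and> Y \<subseteq> A \<and> card Y = N \<and> (\<forall>y\<in>Y. \<forall>y'\<in>Y. y \<noteq> y' \<longrightarrow> d < norm (y - y'))"
proof (induction N)
  case 0 then show ?case by (intro exI[of _ "{}"]) auto
next
  case (Suc N)
  then obtain Y where Y: "finite Y" "Y \<subseteq> A" "card Y = N" "\<forall>y\<in>Y. \<forall>y'\<in>Y. y \<noteq> y' \<longrightarrow> d < norm (y - y')"
    by blast
  define B where "B = (\<Sum>y\<in>Y. norm y)"
  obtain a where a: "a \<in> A" "norm a > B + d" using nb unfolding bounded_iff by (meson not_le)
  have yB: "norm y \<le> B" if "y \<in> Y" for y unfolding B_def by (rule member_le_sum[OF that _ Y(1)]) simp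
  have aY: "a \<notin> Y" using yB a d by force
  have far: "d < norm (a - y)" if "y \<in> Y" for y
  proof -
    have "norm a - norm y \<le> norm (a - y)" by (rule norm_triangle_ineq2)
    then show ?thesis using yB[OF that] a by linarith
  qed
  have "d < norm (y - y')" if "y \<in> insert a Y" "y' \<in> insert a Y" "y \<noteq> y'" for y y'
    using that Y(4) far norm_minus_commute[of a] by (metis insert_iff)
  then show ?case using Y aY a by (intro exI[of _ "insert a Y"]) auto
qed

lemma int_interval_card:
  fixes a h :: real
  assumes "1 \<le> h"
  shows "h \<le> real (card {\<lceil>a - h\<rceil>..\<lfloor>a + h\<rfloor>})"
proof -
  have c1: "real_of_int \<lceil>a - h\<rceil> < a - h + 1" by linarith
  have c2: "a + h - 1 < real_of_int \<lfloor>a + h\<rfloor>" by linarith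
  have "h \<le> real_of_int \<lfloor>a + h\<rfloor> - real_of_int \<lceil>a - h\<rceil> + 1" using c1 c2 assms by linarith
  then have "h \<le> real_of_int (\<lfloor>a + h\<rfloor> - \<lceil>a - h\<rceil> + 1)" by simp
  moreover have "0 \<le> \<lfloor>a + h\<rfloor> - \<lceil>a - h\<rceil> + 1" using calculation assms by linarith
  ultimately show ?thesis by simp
qed

lemma newton_bounded:
  fixes S :: "(nat \<times> (int ^ 'n)) set"
  assumes sg: "is_semigroup S" and gr: "graded S" and am: "ample S" and rg: "restricted_growth S"
  shows "bounded (Newton_set S)"
proof (rule ccontr)
  assume nb: "\<not> bounded (Newton_set S)"
  have Cv: "convex (Con S)" and Ck: "cone (Con S)" using Con_props by blast+
  obtain z where zi: "z \<in> interior (Con S)" using Con_interior[OF gr am] by blast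
  then obtain r where r: "r > 0" "ball z r \<subseteq> Con S" using mem_interior by blast
  have fz: "fst z > 0"
  proof -
    define w where "w = z - (r/2) *\<^sub>R (1::real, 0::real^'n)"
    have "dist z w = r / 2" using r unfolding w_def by (simp add: dist_norm)
    then have "w \<in> ball z r" using r by simp
    then have "0 \<le> fst w" using r Con_fst by blast
    then show ?thesis using r unfolding w_def by simp
  qed
  define z0 where "z0 = (1 / fst z) *\<^sub>R z"
  define \<rho> where "\<rho> = (1 / fst z) * r"
  have z0b: "ball z0 \<rho> \<subseteq> Con S" unfolding z0_def \<rho>_def using fz by (intro cone_ball_scale[OF Ck r(2)]) simp
  have fz0: "fst z0 = 1" unfolding z0_def using fz by simp
  have rho: "\<rho> > 0" unfolding \<rho>_def using fz r by simp
  define \<epsilon> where "\<epsilon> = \<rho> / 2"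
  have ep: "\<epsilon> > 0" unfolding \<epsilon>_def using rho by simp
  define cen where "cen y = (1/2) *\<^sub>R (z0 + (1, y))" for y :: "real ^'n"
  have cenb: "ball (cen y) \<epsilon> \<subseteq> Con S" if y: "y \<in> Newton_set S" for y
  proof
    fix q assume q: "q \<in> ball (cen y) \<epsilon>"
    have "dist z0 (z0 + 2 *\<^sub>R (q - cen y)) = 2 * dist q (cen y)" by (simp add: dist_norm)
    also have "\<dots> < \<rho>" using q unfolding \<epsilon>_def by (simp add: dist_commute)
    finally have "z0 + 2 *\<^sub>R (q - cen y) \<in> Con S" using z0b by auto
    moreover have "(1, y) \<in> Con S" using y unfolding Newton_set_def by simp
    ultimately have "(1/2) *\<^sub>R (z0 + 2 *\<^sub>R (q - cen y)) + (1/2) *\<^sub>R (1, y) \<in> Con S"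
      by (intro convexD[OF Cv]) auto
    moreover have "(1/2) *\<^sub>R (z0 + 2 *\<^sub>R (q - cen y)) + (1/2) *\<^sub>R (1::real, y) = q"
      unfolding cen_def by (simp add: algebra_simps)
    ultimately show "q \<in> Con S" by simp
  qed
  have fcen: "fst (cen y) = 1" for y unfolding cen_def using fz0 by simp
  obtain C0 where C0: "\<And>k. k > 0 \<Longrightarrow> real (card (slice S k)) \<le> C0 * real k ^ CARD('n)"
    using rg unfolding restricted_growth_def by blast
  define n where "n = CARD('n)"
  have npos: "real n > 0" unfolding n_def by simp
  define N where "N = nat \<lceil>C0 * (2 * real n / \<epsilon>) ^ n\<rceil> + 1"
  have Nbig: "real N > C0 * (2 * real n / \<epsilon>) ^ n" unfolding N_def by linarith
  obtain Y where Y: "finite Y" "Y \<subseteq> Newton_set S" "card Y = N"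
     "\<And>y y'. y \<in> Y \<Longrightarrow> y' \<in> Y \<Longrightarrow> y \<noteq> y' \<Longrightarrow> 2 * \<epsilon> < norm (y - y')"
    using sep_points[OF nb, of "2 * \<epsilon>" N] ep by auto
  define R where "R = (\<Sum>y\<in>Y. norm (cen y)) + \<epsilon>"
  have ep2: "\<epsilon> / 2 > 0" using ep by simp
  obtain k0 where k0: "\<And>k x. k \<ge> k0 \<Longrightarrow> ball (emb (k, x)) (\<epsilon> / 2 * real k) \<subseteq> Con S \<and> norm (emb (k, x)) \<le> R * real k
            \<Longrightarrow> x \<in> slice S k"
    using core[OF sg gr am ep2, of R] by blast
  define k where "k = k0 + nat \<lceil>2 * real n / \<epsilon>\<rceil> + 1"
  have kk0: "k \<ge> k0" unfolding k_def by simp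
  have kbig: "real k > 2 * real n / \<epsilon>" unfolding k_def by linarith
  have kpos: "real k > 0" using kbig npos ep by (smt (verit) divide_pos_pos)
  define h where "h = \<epsilon> * real k / (2 * real n)"
  have h1: "1 \<le> h" unfolding h_def using kbig npos ep by (simp add: field_simps)
  have nh: "real n * h = \<epsilon> / 2 * real k" unfolding h_def using npos by (simp add: field_simps)
  define L where "L y = {x::int^'n. \<forall>i. x $ i \<in> {\<lceil>real k * snd (cen y) $ i - h\<rceil>..\<lfloor>real k * snd (cen y) $ i + h\<rfloor>}}" for y
  have Lnorm: "norm (vecr x - real k *\<^sub>R snd (cen y)) \<le> \<epsilon> / 2 * real k" if x: "x \<in> L y" for x y
  proof -
    have "norm (vecr x - real k *\<^sub>R snd (cen y)) \<le> (\<Sum>i\<in>UNIV. \<bar>(vecr x - real k *\<^sub>R snd (cen y)) $ i\<bar>)"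
      by (rule norm_le_l1_cart)
    also have "\<dots> \<le> (\<Sum>i\<in>(UNIV::'n set). h)"
    proof (rule sum_mono)
      fix i
      have "\<lceil>real k * snd (cen y) $ i - h\<rceil> \<le> x $ i" "x $ i \<le> \<lfloor>real k * snd (cen y) $ i + h\<rfloor>"
        using x unfolding L_def by auto
      then have "real k * snd (cen y) $ i - h \<le> real_of_int (x $ i)" "real_of_int (x $ i) \<le> real k * snd (cen y) $ i + h"
        by (simp_all add: ceiling_le_iff le_floor_iff)
      then show "\<bar>(vecr x - real k *\<^sub>R snd (cen y)) $ i\<bar> \<le> h" by (simp add: vecr_def abs_le_iff)
    qed
    also have "\<dots> = real n * h" unfolding n_def by simp
    finally show ?thesis using nh by simp
  qed
  have Lsub: "L y \<subseteq> slice S k" if y: "y \<in> Y" for y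
  proof
    fix x assume x: "x \<in> L y"
    have eq: "emb (k, x) - real k *\<^sub>R cen y = (0, vecr x - real k *\<^sub>R snd (cen y))"
      using fcen[of y] by (simp add: emb_eq prod_eq_iff)
    have dd: "dist (real k *\<^sub>R cen y) (emb (k, x)) \<le> \<epsilon> / 2 * real k"
      using Lnorm[OF x] by (simp add: dist_norm norm_minus_commute eq)
    have "ball (emb (k, x)) (\<epsilon> / 2 * real k) \<subseteq> ball (real k *\<^sub>R cen y) (real k * \<epsilon>)"
    proof
      fix q assume "q \<in> ball (emb (k, x)) (\<epsilon> / 2 * real k)"
      then have "dist (emb (k, x)) q < \<epsilon> / 2 * real k" by simp
      then have "dist (real k *\<^sub>R cen y) (emb (k, x)) + dist (emb (k, x)) q < \<epsilon> / 2 * real k + \<epsilon> / 2 * real k"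
        by (rule add_le_less_mono[OF dd])
      then have "dist (real k *\<^sub>R cen y) q < \<epsilon> / 2 * real k + \<epsilon> / 2 * real k"
        using dist_triangle[of "real k *\<^sub>R cen y" q "emb (k, x)"] by linarith
      then have "dist (real k *\<^sub>R cen y) q < real k * \<epsilon>" by (simp add: algebra_simps)
      then show "q \<in> ball (real k *\<^sub>R cen y) (real k * \<epsilon>)" by simp
    qed
    also have "\<dots> \<subseteq> Con S" by (rule cone_ball_scale[OF Ck cenb[OF subsetD[OF Y(2) y]] kpos])
    finally have b: "ball (emb (k, x)) (\<epsilon> / 2 * real k) \<subseteq> Con S" .
    have "norm (emb (k, x)) = norm (real k *\<^sub>R cen y + (emb (k, x) - real k *\<^sub>R cen y))" by simp
    also have "\<dots> \<le> norm (real k *\<^sub>R cen y) + norm (emb (k, x) - real k *\<^sub>R cen y)"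
      by (rule norm_triangle_ineq)
    also have "\<dots> = norm (real k *\<^sub>R cen y) + dist (real k *\<^sub>R cen y) (emb (k, x))"
      by (simp add: dist_norm norm_minus_commute)
    also have "\<dots> \<le> real k * norm (cen y) + \<epsilon> / 2 * real k" using dd kpos by simp
    also have "\<dots> \<le> R * real k"
    proof -
      have "norm (cen y) \<le> (\<Sum>y\<in>Y. norm (cen y))" by (rule member_le_sum[OF y _ Y(1)]) simp
      then have "norm (cen y) + \<epsilon> / 2 \<le> R" unfolding R_def using ep by simp
      then have "real k * (norm (cen y) + \<epsilon> / 2) \<le> real k * R" using kpos by simp
      then show ?thesis by (simp add: algebra_simps)
    qed
    finally show "x \<in> slice S k" using k0[OF kk0] b by blast
  qed
  have Ldisj: "L y \<inter> L y' = {}" if "y \<in> Y" "y' \<in> Y" "y \<noteq> y'" for y y'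
  proof (rule ccontr)
    assume "L y \<inter> L y' \<noteq> {}"
    then obtain x where x: "x \<in> L y" "x \<in> L y'" by blast
    have "norm (real k *\<^sub>R snd (cen y) - real k *\<^sub>R snd (cen y')) =
          norm ((vecr x - real k *\<^sub>R snd (cen y')) - (vecr x - real k *\<^sub>R snd (cen y)))" by simp
    also have "\<dots> \<le> norm (vecr x - real k *\<^sub>R snd (cen y')) + norm (vecr x - real k *\<^sub>R snd (cen y))"
      by (rule norm_triangle_ineq4)
    also have "\<dots> \<le> \<epsilon> / 2 * real k + \<epsilon> / 2 * real k"
      using Lnorm[OF x(1)] Lnorm[OF x(2)] by simp
    finally have "norm (real k *\<^sub>R snd (cen y) - real k *\<^sub>R snd (cen y')) \<le> \<epsilon> / 2 * real k + \<epsilon> / 2 * real k" .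
    moreover have "real k *\<^sub>R snd (cen y) - real k *\<^sub>R snd (cen y') = (real k / 2) *\<^sub>R (y - y')"
      unfolding cen_def by (simp add: algebra_simps)
    ultimately have "real k / 2 * norm (y - y') \<le> \<epsilon> * real k" using kpos by simp
    then have "norm (y - y') \<le> 2 * \<epsilon>" using kpos by (simp add: field_simps)
    then show False using Y(4)[OF that] by simp
  qed
  have Lcard: "h ^ n \<le> real (card (L y))" for y
  proof -
    have "card (L y) = (\<Prod>i\<in>UNIV. card {\<lceil>real k * snd (cen y) $ i - h\<rceil>..\<lfloor>real k * snd (cen y) $ i + h\<rfloor>})"
      unfolding L_def by (rule vec_box_card) simp
    then have "real (card (L y)) = (\<Prod>i\<in>UNIV. real (card {\<lceil>real k * snd (cen y) $ i - h\<rceil>..\<lfloor>real k * snd (cen y) $ i + h\<rfloor>}))"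
      by (simp add: of_nat_prod)
    moreover have "(\<Prod>i\<in>(UNIV::'n set). h) \<le> (\<Prod>i\<in>UNIV. real (card {\<lceil>real k * snd (cen y) $ i - h\<rceil>..\<lfloor>real k * snd (cen y) $ i + h\<rfloor>}))"
      by (rule prod_mono) (use h1 int_interval_card in auto)
    ultimately show ?thesis unfolding n_def by simp
  qed
  have finL: "finite (L y)" for y unfolding L_def by (rule vec_box_finite) simp
  have "real N * h ^ n = (\<Sum>y\<in>Y. h ^ n)" using Y(3) by simp
  also have "\<dots> \<le> (\<Sum>y\<in>Y. real (card (L y)))" by (rule sum_mono) (rule Lcard)
  also have "\<dots> = real (card (\<Union>y\<in>Y. L y))"
    using card_UN_disjoint[OF Y(1), of L] finL Ldisj by (simp add: of_nat_sum)
  also have "\<dots> \<le> real (card (slice S k))"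
  proof -
    have "finite (slice S k)" using gr kpos unfolding graded_def by simp
    moreover have "(\<Union>y\<in>Y. L y) \<subseteq> slice S k" using Lsub by blast
    ultimately show ?thesis by (simp add: card_mono)
  qed
  also have "\<dots> \<le> C0 * real k ^ n" using C0[of k] kpos unfolding n_def by simp
  finally have ineq: "real N * h ^ n \<le> C0 * real k ^ n" .
  define a where "a = \<epsilon> / (2 * real n)"
  define b where "b = 2 * real n / \<epsilon>"
  have hk: "h = a * real k" unfolding h_def a_def by simp
  have hn: "h ^ n = a ^ n * real k ^ n" unfolding hk by (rule power_mult_distrib)
  have kn: "real k ^ n > 0" using kpos by simp
  have "(real N * a ^ n) * real k ^ n \<le> C0 * real k ^ n" using ineq unfolding hn by (simp add: mult.assoc)
  then have i2: "real N * a ^ n \<le> C0" using kn by (simp only: mult_le_cancel_right_pos)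
  have ab: "a * b = 1" unfolding a_def b_def using ep npos by simp
  have "a ^ n * b ^ n = 1" by (simp add: power_mult_distrib[symmetric] ab)
  then have "real N = (real N * a ^ n) * b ^ n" by (simp add: mult.assoc)
  also have "\<dots> \<le> C0 * b ^ n"
    using i2 ep npos unfolding b_def by (intro mult_right_mono) simp_all
  finally have "real N \<le> C0 * (2 * real n / \<epsilon>) ^ n" unfolding b_def .
  then show False using Nbig by simp
qed


theorem mainTheorem6:
  fixes S :: "(nat \<times> (int ^ 'n)) set"
  assumes "is_semigroup S" and "graded S" and "ample S" and "restricted_growth S"
  shows "bounded (Newton_set S) \<and> ((\<lambda>k. dfun S k / real k) \<longlonglongrightarrow> 0)"
proof -
  have b: "bounded (Newton_set S)" by (rule newton_bounded[OF assms])
  show ?thesis using b dfun_limit[OF assms(1-3) b] by blast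
qed

end
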